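(* Let $\mathbb{P}$ be any of the fifteen preferential conditional logics $\mathbb{PCL}$, $\mathbb{PN}$, $\mathbb{PT}$, $\mathbb{PW}$, $\mathbb{PC}$, $\mathbb{PU}$, $\mathbb{PNU}$, $\mathbb{PTU}$, $\mathbb{PWU}$, $\mathbb{PCU}$, $\mathbb{PA}$, $\mathbb{PNA}$, $\mathbb{PTA}$, $\mathbb{PWA}$, $\mathbb{PCA}$, with axiom system as described in the context, and let $\mathcal{P}$ be the corresponding class of neighbourhood models. For every formula $F$, if $F$ is derivable in the axiom system of $\mathbb{P}$, then $F$ is valid in every model of $\mathcal{P}$.
   Context: Formulas: $\mathcal{L} ::= p \mid \bot \mid A\wedge B \mid A\lor B \mid A\rightarrow B \mid A>B$ with $p$ propositional variables; $\neg A := A\to\bot$, $\top:=\neg\bot$. Axiom systems (over classical propositional logic with modus ponens): $\mathbb{PCL}$ = (RCEA) from $A\leftrightarrow B$ infer $(A>C)\leftrightarrow(B>C)$; (RCK) from $A\rightarrow B$ infer $(C>A)\rightarrow(C>B)$; (ID) $A>A$; (R-And) $(A>B)\wedge(A>C)\rightarrow(A>(B\wedge C))$; (CM) $(A>B)\wedge(A>C)\rightarrow((A\wedge B)>C)$; (OR) $(A>C)\wedge(B>C)\rightarrow((A\lor B)>C)$. Further axioms: (N) $\neg(\top>\bot)$; (T) $A\rightarrow\neg(A>\bot)$; (W) $(A>B)\rightarrow(A\rightarrow B)$; (C) $(A\wedge B)\rightarrow(A>B)$; (U$_1$) $(\neg A>\bot)\rightarrow(\neg(\neg A>\bot)>\bot)$;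 (U$_2$) $\neg(A>\bot)\rightarrow((A>\bot)>\bot)$; (A$_1$) $(A>B)\rightarrow(C>(A>B))$; (A$_2$) $\neg(A>B)\rightarrow(C>\neg(A>B))$. $\mathbb{PN}=\mathbb{PCL}+$(N), $\mathbb{PT}=\mathbb{PN}+$(T), $\mathbb{PW}=\mathbb{PT}+$(W), $\mathbb{PC}=\mathbb{PW}+$(C); $\mathbb{PU}=\mathbb{PCL}+$(U$_1$)+(U$_2$), and $\mathbb{PNU},\mathbb{PTU},\mathbb{PWU},\mathbb{PCU}$ add to $\mathbb{PU}$ respectively (N); (N),(T); (N),(T),(W); (N),(T),(W),(C); $\mathbb{PA}=\mathbb{PCL}+$(A$_1$)+(A$_2$), and $\mathbb{PNA},\dots,\mathbb{PCA}$ analogously. A neighbourhood model is $\langle W,N,\llbracket\cdot\rrbracket\rangle$ with $W\neq\emptyset$, $N:W\to\mathcal{P}(\mathcal{P}(W))$ such that every $\alpha\in N(x)$ is non-empty, and $\llbracket\cdot\rrbracket$ assigns to each atom a subset of $W$. Forcing: $x\Vdash p$ iff $x\in\llbracket p\rrbracket$, Boolean connectives classical, and $x\Vdash A>B$ iff for all $\alpha\in N(x)$, if some $y\in\alpha$ has $y\Vdash A$, then there is $\beta\in N(x)$ with $\beta\subseteq\alpha$, some $y\in\beta$ with $y\Vdash A$, and every $y\in\beta$ satisfies $y\Vdash A\to B$. A formula is valid in a model if forced at every world. Model conditions: normality: $N(x)\neq\emptyset$ for all $x$; total reflexivity: for all $x$ there is $\alpha\in N(x)$ with $x\in\alpha$;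 weak centering: $x\in\alpha$ for all $\alpha\in N(x)$; centering: weak centering and $\{x\}\in N(x)$ for all $x$; uniformity: if $\alpha\in N(x)$ and $y\in\alpha$ then $\bigcup N(x)=\bigcup N(y)$; absoluteness: if $\alpha\in N(x)$ and $y\in\alpha$ then $N(x)=N(y)$. The class corresponding to a logic is the class of neighbourhood models satisfying the conditions named by its letters (N normality, T total reflexivity, W weak centering, C centering, U uniformity, A absoluteness; $\mathbb{PCL}$: all neighbourhood models). *)

theory Defs
  imports Main
begin

datatype fm =
    Atom nat
  | Bot
  | And fm fm
  | Or fm fm
  | Imp fm fm
  | Cond fm fm

definition Neg :: "fm \<Rightarrow> fm" where "Neg A = Imp A Bot"
definition Top :: fm where "Top = Neg Bot"
definition Iff :: "fm \<Rightarrow> fm \<Rightarrow> fm" where "Iff A B = And (Imp A B) (Imp B A)"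

fun beval :: "(fm \<Rightarrow> bool) \<Rightarrow> fm \<Rightarrow> bool" where
  "beval v (Atom p) = v (Atom p)"
| "beval v Bot = False"
| "beval v (And A B) = (beval v A \<and> beval v B)"
| "beval v (Or A B) = (beval v A \<or> beval v B)"
| "beval v (Imp A B) = (beval v A \<longrightarrow> beval v B)"
| "beval v (Cond A B) = v (Cond A B)"

definition taut :: "fm \<Rightarrow> bool" where
  "taut F \<longleftrightarrow> (\<forall>v. beval v F)"

datatype logic =
    PCL | PN | PT | PW | PC
  | PU | PNU | PTU | PWU | PCU
  | PA | PNA | PTA | PWA | PCA

definition hasN :: "logic \<Rightarrow> bool" where
  "hasN L \<longleftrightarrow> L \<in> {PN, PT, PW, PC, PNU, PTU, PWU, PCU, PNA, PTA, PWA, PCA}"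
definition hasT :: "logic \<Rightarrow> bool" where
  "hasT L \<longleftrightarrow> L \<in> {PT, PW, PC, PTU, PWU, PCU, PTA, PWA, PCA}"
definition hasW :: "logic \<Rightarrow> bool" where
  "hasW L \<longleftrightarrow> L \<in> {PW, PC, PWU, PCU, PWA, PCA}"
definition hasC :: "logic \<Rightarrow> bool" where
  "hasC L \<longleftrightarrow> L \<in> {PC, PCU, PCA}"
definition hasU :: "logic \<Rightarrow> bool" where
  "hasU L \<longleftrightarrow> L \<in> {PU, PNU, PTU, PWU, PCU}"
definition hasA :: "logic \<Rightarrow> bool" where
  "hasA L \<longleftrightarrow> L \<in> {PA, PNA, PTA, PWA, PCA}"

inductive deriv :: "logic \<Rightarrow> fm \<Rightarrow> bool" for L :: logic where
  Taut: "taut F \<Longrightarrow> deriv L F"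
| MP: "deriv L (Imp A B) \<Longrightarrow> deriv L A \<Longrightarrow> deriv L B"
| RCEA: "deriv L (Iff A B) \<Longrightarrow> deriv L (Iff (Cond A C) (Cond B C))"
| RCK: "deriv L (Imp A B) \<Longrightarrow> deriv L (Imp (Cond C A) (Cond C B))"
| ID: "deriv L (Cond A A)"
| RAnd: "deriv L (Imp (And (Cond A B) (Cond A C)) (Cond A (And B C)))"
| CM: "deriv L (Imp (And (Cond A B) (Cond A C)) (Cond (And A B) C))"
| OR: "deriv L (Imp (And (Cond A C) (Cond B C)) (Cond (Or A B) C))"
| AxN: "hasN L \<Longrightarrow> deriv L (Neg (Cond Top Bot))"
| AxT: "hasT L \<Longrightarrow> deriv L (Imp A (Neg (Cond A Bot)))"
| AxW: "hasW L \<Longrightarrow> deriv L (Imp (Cond A B) (Imp A B))"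
| AxC: "hasC L \<Longrightarrow> deriv L (Imp (And A B) (Cond A B))"
| AxU1: "hasU L \<Longrightarrow> deriv L (Imp (Cond (Neg A) Bot) (Cond (Neg (Cond (Neg A) Bot)) Bot))"
| AxU2: "hasU L \<Longrightarrow> deriv L (Imp (Neg (Cond A Bot)) (Cond (Cond A Bot) Bot))"
| AxA1: "hasA L \<Longrightarrow> deriv L (Imp (Cond A B) (Cond C (Cond A B)))"
| AxA2: "hasA L \<Longrightarrow> deriv L (Imp (Neg (Cond A B)) (Cond C (Neg (Cond A B))))"

text \<open>The set of worlds W is the (nonempty) type 'w; N is the neighbourhood function,
  V the valuation of atoms.\<close>

definition nbhd_model :: "('w \<Rightarrow> 'w set set) \<Rightarrow> bool" where
  "nbhd_model N \<longleftrightarrow> (\<forall>x. \<forall>\<alpha>\<in>N x. \<alpha> \<noteq> {})"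

fun forces :: "('w \<Rightarrow> 'w set set) \<Rightarrow> (nat \<Rightarrow> 'w set) \<Rightarrow> 'w \<Rightarrow> fm \<Rightarrow> bool" where
  "forces N V x (Atom p) = (x \<in> V p)"
| "forces N V x Bot = False"
| "forces N V x (And A B) = (forces N V x A \<and> forces N V x B)"
| "forces N V x (Or A B) = (forces N V x A \<or> forces N V x B)"
| "forces N V x (Imp A B) = (forces N V x A \<longrightarrow> forces N V x B)"
| "forces N V x (Cond A B) =
     (\<forall>\<alpha>\<in>N x. (\<exists>y\<in>\<alpha>. forces N V y A) \<longrightarrow>
        (\<exists>\<beta>\<in>N x. \<beta> \<subseteq> \<alpha> \<and> (\<exists>y\<in>\<beta>. forces N V y A) \<and>
                   (\<forall>y\<in>\<beta>. forces N V y A \<longrightarrow> forces N V y B)))"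

definition valid_in :: "('w \<Rightarrow> 'w set set) \<Rightarrow> (nat \<Rightarrow> 'w set) \<Rightarrow> fm \<Rightarrow> bool" where
  "valid_in N V F \<longleftrightarrow> (\<forall>x. forces N V x F)"

definition normal :: "('w \<Rightarrow> 'w set set) \<Rightarrow> bool" where
  "normal N \<longleftrightarrow> (\<forall>x. N x \<noteq> {})"
definition total_refl :: "('w \<Rightarrow> 'w set set) \<Rightarrow> bool" where
  "total_refl N \<longleftrightarrow> (\<forall>x. \<exists>\<alpha>\<in>N x. x \<in> \<alpha>)"
definition weak_center :: "('w \<Rightarrow> 'w set set) \<Rightarrow> bool" where
  "weak_center N \<longleftrightarrow> (\<forall>x. \<forall>\<alpha>\<in>N x. x \<in> \<alpha>)"
definition center :: "('w \<Rightarrow> 'w set set) \<Rightarrow> bool" where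
  "center N \<longleftrightarrow> weak_center N \<and> (\<forall>x. {x} \<in> N x)"
definition uniform :: "('w \<Rightarrow> 'w set set) \<Rightarrow> bool" where
  "uniform N \<longleftrightarrow> (\<forall>x. \<forall>\<alpha>\<in>N x. \<forall>y\<in>\<alpha>. \<Union>(N x) = \<Union>(N y))"
definition absolute :: "('w \<Rightarrow> 'w set set) \<Rightarrow> bool" where
  "absolute N \<longleftrightarrow> (\<forall>x. \<forall>\<alpha>\<in>N x. \<forall>y\<in>\<alpha>. N x = N y)"

definition in_class :: "logic \<Rightarrow> ('w \<Rightarrow> 'w set set) \<Rightarrow> bool" where
  "in_class L N \<longleftrightarrow> nbhd_model N
     \<and> (hasN L \<longrightarrow> normal N) \<and> (hasT L \<longrightarrow> total_refl N)
     \<and> (hasW L \<longrightarrow> weak_center N) \<and> (hasC L \<longrightarrow> center N)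
     \<and> (hasU L \<longrightarrow> uniform N) \<and> (hasA L \<longrightarrow> absolute N)"

end

theory Submission
  imports Defs
begin

lemma beval_forces: "beval (\<lambda>G. forces N V x G) F = forces N V x F"
  by (induction F) auto

lemma cond_bot: "forces N V x (Cond A Bot) \<longleftrightarrow> (\<forall>\<alpha>\<in>N x. \<forall>y\<in>\<alpha>. \<not> forces N V y A)"
  by auto

lemma rck: "\<forall>x. forces N V x (Imp A B) \<Longrightarrow> \<forall>x. forces N V x (Imp (Cond C A) (Cond C B))"
proof -
  assume "\<forall>x. forces N V x (Imp A B)"
  then have ab: "\<And>y. forces N V y A \<Longrightarrow> forces N V y B" by simp
  show ?thesis
  proof (intro allI, simp only: forces.simps, intro impI ballI)
    fix x \<alpha>
    assume h: "\<forall>\<alpha>\<in>N x. (\<exists>y\<in>\<alpha>. forces N V y C) \<longrightarrow>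
        (\<exists>\<beta>\<in>N x. \<beta> \<subseteq> \<alpha> \<and> (\<exists>y\<in>\<beta>. forces N V y C) \<and> (\<forall>y\<in>\<beta>. forces N V y C \<longrightarrow> forces N V y A))"
      and a: "\<alpha> \<in> N x" "\<exists>y\<in>\<alpha>. forces N V y C"
    from h a obtain \<beta> where b: "\<beta>\<in>N x" "\<beta> \<subseteq> \<alpha>" "\<exists>y\<in>\<beta>. forces N V y C" "\<forall>y\<in>\<beta>. forces N V y C \<longrightarrow> forces N V y A" by blast
    show "\<exists>\<beta>\<in>N x. \<beta> \<subseteq> \<alpha> \<and> (\<exists>y\<in>\<beta>. forces N V y C) \<and> (\<forall>y\<in>\<beta>. forces N V y C \<longrightarrow> forces N V y B)"
      using b ab by blast
  qed
qed

lemma s_taut: "taut F \<Longrightarrow> forces N V x F"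
  unfolding taut_def using beval_forces[of N V x F] by simp

lemma s_rcea: "\<forall>x. forces N V x (Iff A B) \<Longrightarrow> \<forall>x. forces N V x (Iff (Cond A C) (Cond B C))"
proof -
  assume "\<forall>x. forces N V x (Iff A B)"
  then have "\<forall>y. forces N V y A = forces N V y B" by (simp add: Iff_def) blast
  then show ?thesis by (simp add: Iff_def)
qed

lemma s_id: "forces N V x (Cond A A)" by auto

lemma s_n:
  assumes "normal N" "nbhd_model N"
  shows "\<forall>x. forces N V x (Neg (Cond Top Bot))"
proof -
  show ?thesis using assms unfolding Neg_def Top_def normal_def nbhd_model_def
    by (simp only: forces.simps cond_bot) blast
qed

lemma s_t:
  assumes "total_refl N"
  shows "\<forall>x. forces N V x (Imp A (Neg (Cond A Bot)))"
proof -
  show ?thesis using assms unfolding Neg_def total_refl_def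
    by (simp only: forces.simps cond_bot) blast
qed

lemma s_w:
  assumes "total_refl N" "weak_center N"
  shows "\<forall>x. forces N V x (Imp (Cond A B) (Imp A B))"
proof -
  show ?thesis
  proof (intro allI, simp only: forces.simps, intro impI)
    fix x
    assume h: "\<forall>\<alpha>\<in>N x. (\<exists>y\<in>\<alpha>. forces N V y A) \<longrightarrow>
        (\<exists>\<beta>\<in>N x. \<beta> \<subseteq> \<alpha> \<and> (\<exists>y\<in>\<beta>. forces N V y A) \<and> (\<forall>y\<in>\<beta>. forces N V y A \<longrightarrow> forces N V y B))"
      and xa: "forces N V x A"
    from \<open>total_refl N\<close> obtain \<alpha> where a: "\<alpha> \<in> N x" "x \<in> \<alpha>" unfolding total_refl_def by blast
    from h a xa obtain \<beta> where b: "\<beta>\<in>N x" "\<forall>y\<in>\<beta>. forces N V y A \<longrightarrow> forces N V y B" by blast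
    from \<open>weak_center N\<close> b have "x \<in> \<beta>" unfolding weak_center_def by blast
    with b xa show "forces N V x B" by blast
  qed
qed

lemma s_c:
  assumes "center N"
  shows "\<forall>x. forces N V x (Imp (And A B) (Cond A B))"
proof -
  show ?thesis
  proof (intro allI, simp only: forces.simps, intro impI ballI, elim conjE)
    fix x \<alpha>
    assume xa: "forces N V x A" "forces N V x B" and a: "\<alpha> \<in> N x"
    from \<open>center N\<close> a have "x \<in> \<alpha>" "{x} \<in> N x" unfolding center_def weak_center_def by blast+
    then show "\<exists>\<beta>\<in>N x. \<beta> \<subseteq> \<alpha> \<and> (\<exists>y\<in>\<beta>. forces N V y A) \<and> (\<forall>y\<in>\<beta>. forces N V y A \<longrightarrow> forces N V y B)"
      using xa by (intro bexI[of _ "{x}"]) auto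
  qed
qed

lemma s_a1:
  assumes u: "absolute N"
  shows "\<forall>x. forces N V x (Imp (Cond A B) (Cond C (Cond A B)))"
proof -
  show ?thesis
  proof (intro allI, simp only: forces.simps, intro impI ballI)
    fix x \<alpha>
    assume h: "\<forall>\<alpha>\<in>N x. (\<exists>y\<in>\<alpha>. forces N V y A) \<longrightarrow>
        (\<exists>\<beta>\<in>N x. \<beta> \<subseteq> \<alpha> \<and> (\<exists>y\<in>\<beta>. forces N V y A) \<and> (\<forall>y\<in>\<beta>. forces N V y A \<longrightarrow> forces N V y B))"
      and a: "\<alpha> \<in> N x" "\<exists>y\<in>\<alpha>. forces N V y C"
    have "\<forall>y\<in>\<alpha>. N y = N x" using u a unfolding absolute_def by metis
    then show "\<exists>\<beta>\<in>N x. \<beta> \<subseteq> \<alpha> \<and> (\<exists>y\<in>\<beta>. forces N V y C) \<and> (\<forall>y\<in>\<beta>. forces N V y C \<longrightarrow>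
       (\<forall>\<alpha>\<in>N y. (\<exists>y\<in>\<alpha>. forces N V y A) \<longrightarrow>
        (\<exists>\<beta>\<in>N y. \<beta> \<subseteq> \<alpha> \<and> (\<exists>y\<in>\<beta>. forces N V y A) \<and> (\<forall>y\<in>\<beta>. forces N V y A \<longrightarrow> forces N V y B))))"
      using a h by (intro bexI[of _ \<alpha>]) auto
  qed
qed

lemma s_a2:
  assumes u: "absolute N"
  shows "\<forall>x. forces N V x (Imp (Neg (Cond A B)) (Cond C (Neg (Cond A B))))"
proof -
  show ?thesis unfolding Neg_def
  proof (intro allI, simp only: forces.simps, intro impI ballI)
    fix x \<alpha>
    assume h: "(\<forall>\<alpha>\<in>N x. (\<exists>y\<in>\<alpha>. forces N V y A) \<longrightarrow>
        (\<exists>\<beta>\<in>N x. \<beta> \<subseteq> \<alpha> \<and> (\<exists>y\<in>\<beta>. forces N V y A) \<and> (\<forall>y\<in>\<beta>. forces N V y A \<longrightarrow> forces N V y B))) \<longrightarrow> False"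
      and a: "\<alpha> \<in> N x" "\<exists>y\<in>\<alpha>. forces N V y C"
    have "\<forall>y\<in>\<alpha>. N y = N x" using u a unfolding absolute_def by metis
    then show "\<exists>\<beta>\<in>N x. \<beta> \<subseteq> \<alpha> \<and> (\<exists>y\<in>\<beta>. forces N V y C) \<and> (\<forall>y\<in>\<beta>. forces N V y C \<longrightarrow>
       ((\<forall>\<alpha>\<in>N y. (\<exists>y\<in>\<alpha>. forces N V y A) \<longrightarrow>
        (\<exists>\<beta>\<in>N y. \<beta> \<subseteq> \<alpha> \<and> (\<exists>y\<in>\<beta>. forces N V y A) \<and> (\<forall>y\<in>\<beta>. forces N V y A \<longrightarrow> forces N V y B))) \<longrightarrow> False))"
      using a h by (intro bexI[of _ \<alpha>]) auto
  qed
qed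

definition cnd :: "('w \<Rightarrow> 'w set set) \<Rightarrow> 'w \<Rightarrow> ('w \<Rightarrow> bool) \<Rightarrow> ('w \<Rightarrow> bool) \<Rightarrow> bool" where
  "cnd N x P Q \<longleftrightarrow> (\<forall>\<alpha>\<in>N x. (\<exists>y\<in>\<alpha>. P y) \<longrightarrow>
        (\<exists>\<beta>\<in>N x. \<beta> \<subseteq> \<alpha> \<and> (\<exists>y\<in>\<beta>. P y) \<and> (\<forall>y\<in>\<beta>. P y \<longrightarrow> Q y)))"

lemma forces_cond: "forces N V x (Cond A B) = cnd N x (\<lambda>y. forces N V y A) (\<lambda>y. forces N V y B)"
  by (simp add: cnd_def)

lemmas fsimps = forces.simps(1-5) forces_cond

lemma cnd_rand: "cnd N x P Q \<Longrightarrow> cnd N x P R \<Longrightarrow> cnd N x P (\<lambda>y. Q y \<and> R y)"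
proof (unfold cnd_def, intro ballI impI)
  fix \<alpha> assume h1: "\<forall>\<alpha>\<in>N x. (\<exists>y\<in>\<alpha>. P y) \<longrightarrow> (\<exists>\<beta>\<in>N x. \<beta> \<subseteq> \<alpha> \<and> (\<exists>y\<in>\<beta>. P y) \<and> (\<forall>y\<in>\<beta>. P y \<longrightarrow> Q y))"
    and h2: "\<forall>\<alpha>\<in>N x. (\<exists>y\<in>\<alpha>. P y) \<longrightarrow> (\<exists>\<beta>\<in>N x. \<beta> \<subseteq> \<alpha> \<and> (\<exists>y\<in>\<beta>. P y) \<and> (\<forall>y\<in>\<beta>. P y \<longrightarrow> R y))"
    and a: "\<alpha> \<in> N x" "\<exists>y\<in>\<alpha>. P y"
  from h1 a obtain \<beta> where b: "\<beta>\<in>N x" "\<beta> \<subseteq> \<alpha>" "\<exists>y\<in>\<beta>. P y" "\<forall>y\<in>\<beta>. P y \<longrightarrow> Q y" by blast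
  from h2 b(1,3) obtain \<gamma> where c: "\<gamma>\<in>N x" "\<gamma> \<subseteq> \<beta>" "\<exists>y\<in>\<gamma>. P y" "\<forall>y\<in>\<gamma>. P y \<longrightarrow> R y" by blast
  have "\<gamma> \<subseteq> \<alpha>" using b(2) c(2) by blast
  moreover have "\<forall>y\<in>\<gamma>. P y \<longrightarrow> Q y \<and> R y" using b(4) c(2,4) by blast
  ultimately show "\<exists>\<beta>\<in>N x. \<beta> \<subseteq> \<alpha> \<and> (\<exists>y\<in>\<beta>. P y) \<and> (\<forall>y\<in>\<beta>. P y \<longrightarrow> Q y \<and> R y)"
    using c(1,3) by blast
qed

lemma cnd_cm: "cnd N x P Q \<Longrightarrow> cnd N x P R \<Longrightarrow> cnd N x (\<lambda>y. P y \<and> Q y) R"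
proof (unfold cnd_def, intro ballI impI)
  fix \<alpha> assume h1: "\<forall>\<alpha>\<in>N x. (\<exists>y\<in>\<alpha>. P y) \<longrightarrow> (\<exists>\<beta>\<in>N x. \<beta> \<subseteq> \<alpha> \<and> (\<exists>y\<in>\<beta>. P y) \<and> (\<forall>y\<in>\<beta>. P y \<longrightarrow> Q y))"
    and h2: "\<forall>\<alpha>\<in>N x. (\<exists>y\<in>\<alpha>. P y) \<longrightarrow> (\<exists>\<beta>\<in>N x. \<beta> \<subseteq> \<alpha> \<and> (\<exists>y\<in>\<beta>. P y) \<and> (\<forall>y\<in>\<beta>. P y \<longrightarrow> R y))"
    and a: "\<alpha> \<in> N x" "\<exists>y\<in>\<alpha>. P y \<and> Q y"
  from a(2) have a2: "\<exists>y\<in>\<alpha>. P y" by blast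
  from h1 a(1) a2 obtain \<beta> where b: "\<beta>\<in>N x" "\<beta> \<subseteq> \<alpha>" "\<exists>y\<in>\<beta>. P y" "\<forall>y\<in>\<beta>. P y \<longrightarrow> Q y" by blast
  from h2 b(1,3) obtain \<gamma> where c: "\<gamma>\<in>N x" "\<gamma> \<subseteq> \<beta>" "\<exists>y\<in>\<gamma>. P y" "\<forall>y\<in>\<gamma>. P y \<longrightarrow> R y" by blast
  have "\<gamma> \<subseteq> \<alpha>" using b(2) c(2) by blast
  moreover have "\<exists>y\<in>\<gamma>. P y \<and> Q y" using b(4) c(2,3) by blast
  moreover have "\<forall>y\<in>\<gamma>. P y \<and> Q y \<longrightarrow> R y" using c(4) by blast
  ultimately show "\<exists>\<beta>\<in>N x. \<beta> \<subseteq> \<alpha> \<and> (\<exists>y\<in>\<beta>. P y \<and> Q y) \<and> (\<forall>y\<in>\<beta>. P y \<and> Q y \<longrightarrow> R y)"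
    using c(1) by blast
qed

lemma cnd_or: "cnd N x P R \<Longrightarrow> cnd N x Q R \<Longrightarrow> cnd N x (\<lambda>y. P y \<or> Q y) R"
proof (unfold cnd_def, intro ballI impI)
  fix \<alpha> assume h1: "\<forall>\<alpha>\<in>N x. (\<exists>y\<in>\<alpha>. P y) \<longrightarrow> (\<exists>\<beta>\<in>N x. \<beta> \<subseteq> \<alpha> \<and> (\<exists>y\<in>\<beta>. P y) \<and> (\<forall>y\<in>\<beta>. P y \<longrightarrow> R y))"
    and h2: "\<forall>\<alpha>\<in>N x. (\<exists>y\<in>\<alpha>. Q y) \<longrightarrow> (\<exists>\<beta>\<in>N x. \<beta> \<subseteq> \<alpha> \<and> (\<exists>y\<in>\<beta>. Q y) \<and> (\<forall>y\<in>\<beta>. Q y \<longrightarrow> R y))"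
    and a: "\<alpha> \<in> N x" "\<exists>y\<in>\<alpha>. P y \<or> Q y"
  show "\<exists>\<beta>\<in>N x. \<beta> \<subseteq> \<alpha> \<and> (\<exists>y\<in>\<beta>. P y \<or> Q y) \<and> (\<forall>y\<in>\<beta>. P y \<or> Q y \<longrightarrow> R y)"
  proof (cases "\<exists>y\<in>\<alpha>. P y")
    case True
    from h1 a(1) True obtain \<beta> where b: "\<beta>\<in>N x" "\<beta> \<subseteq> \<alpha>" "\<exists>y\<in>\<beta>. P y" "\<forall>y\<in>\<beta>. P y \<longrightarrow> R y" by blast
    show ?thesis
    proof (cases "\<exists>y\<in>\<beta>. Q y")
      case True
      from h2 b(1) True obtain \<gamma> where c: "\<gamma>\<in>N x" "\<gamma> \<subseteq> \<beta>" "\<exists>y\<in>\<gamma>. Q y" "\<forall>y\<in>\<gamma>. Q y \<longrightarrow> R y" by blast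
      have "\<gamma> \<subseteq> \<alpha>" using b(2) c(2) by blast
      moreover have "\<forall>y\<in>\<gamma>. P y \<or> Q y \<longrightarrow> R y" using b(4) c(2,4) by blast
      ultimately show ?thesis using c(1,3) by blast
    next
      case False
      then have "\<forall>y\<in>\<beta>. P y \<or> Q y \<longrightarrow> R y" using b(4) by blast
      then show ?thesis using b(1,2,3) by blast
    qed
  next
    case False
    with a(2) have q: "\<exists>y\<in>\<alpha>. Q y" by blast
    from h2 a(1) q obtain \<beta> where b: "\<beta>\<in>N x" "\<beta> \<subseteq> \<alpha>" "\<exists>y\<in>\<beta>. Q y" "\<forall>y\<in>\<beta>. Q y \<longrightarrow> R y" by blast
    have "\<forall>y\<in>\<beta>. P y \<or> Q y \<longrightarrow> R y" using b(2,4) False by blast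
    then show ?thesis using b(1,2,3) by blast
  qed
qed

lemma s_rand: "\<forall>x. forces N V x (Imp (And (Cond A B) (Cond A C)) (Cond A (And B C)))"
  by (simp only: fsimps) (intro allI impI, elim conjE, rule cnd_rand[where P="\<lambda>y. forces N V y A" and Q="\<lambda>y. forces N V y B" and R="\<lambda>y. forces N V y C"])
lemma s_cm: "\<forall>x. forces N V x (Imp (And (Cond A B) (Cond A C)) (Cond (And A B) C))"
  by (simp only: fsimps) (intro allI impI, elim conjE, rule cnd_cm[where P="\<lambda>y. forces N V y A" and Q="\<lambda>y. forces N V y B" and R="\<lambda>y. forces N V y C"])
lemma s_or: "\<forall>x. forces N V x (Imp (And (Cond A C) (Cond B C)) (Cond (Or A B) C))"
  by (simp only: fsimps) (intro allI impI, elim conjE, rule cnd_or[where P="\<lambda>y. forces N V y A" and Q="\<lambda>y. forces N V y B" and R="\<lambda>y. forces N V y C"])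

lemma cnd_bot: "cnd N x P (\<lambda>y. False) \<longleftrightarrow> (\<forall>\<alpha>\<in>N x. \<forall>y\<in>\<alpha>. \<not> P y)"
  unfolding cnd_def by blast

lemma s_u1:
  assumes u: "uniform N"
  shows "\<forall>x. forces N V x (Imp (Cond (Neg A) Bot) (Cond (Neg (Cond (Neg A) Bot)) Bot))"
proof
  fix x
  have e: "\<And>\<alpha> y. \<alpha> \<in> N x \<Longrightarrow> y \<in> \<alpha> \<Longrightarrow> \<Union>(N x) = \<Union>(N y)" using u unfolding uniform_def by blast
  show "forces N V x (Imp (Cond (Neg A) Bot) (Cond (Neg (Cond (Neg A) Bot)) Bot))"
    unfolding Neg_def fsimps cnd_bot using e by blast
qed

lemma s_u2:
  assumes u: "uniform N"
  shows "\<forall>x. forces N V x (Imp (Neg (Cond A Bot)) (Cond (Cond A Bot) Bot))"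
proof
  fix x
  have e: "\<And>\<alpha> y. \<alpha> \<in> N x \<Longrightarrow> y \<in> \<alpha> \<Longrightarrow> \<Union>(N x) = \<Union>(N y)" using u unfolding uniform_def by blast
  show "forces N V x (Imp (Neg (Cond A Bot)) (Cond (Cond A Bot) Bot))"
    unfolding Neg_def fsimps cnd_bot using e by blast
qed

lemma sound: "deriv L F \<Longrightarrow> in_class L N \<Longrightarrow> \<forall>x. forces N V x F"
proof (induction rule: deriv.induct)
  case (Taut F) then show ?case by (simp add: s_taut)
next
  case (MP A B)
  have 1: "\<forall>x. forces N V x (Imp A B)" by (rule MP.IH(1)[OF MP.prems])
  have 2: "\<forall>x. forces N V x A" by (rule MP.IH(2)[OF MP.prems])
  show ?case
  proof
    fix x
    from 1 have "forces N V x A \<longrightarrow> forces N V x B" by simp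
    with 2 show "forces N V x B" by blast
  qed
next
  case (RCEA A B C) show ?case by (rule s_rcea[OF RCEA.IH[OF RCEA.prems]])
next
  case (RCK A B C) show ?case by (rule rck[OF RCK.IH[OF RCK.prems]])
next
  case (ID A) show ?case by (intro allI s_id)
next
  case (RAnd A B C) show ?case by (rule s_rand)
next
  case (CM A B C) show ?case by (rule s_cm)
next
  case (OR A C B) show ?case by (rule s_or)
next
  case AxN then show ?case by (intro s_n) (auto simp: in_class_def)
next
  case (AxT A) then show ?case by (intro s_t) (auto simp: in_class_def)
next
  case (AxW A B) then show ?case by (intro s_w) (auto simp: in_class_def hasW_def hasT_def)
next
  case (AxC A B) then show ?case by (intro s_c) (auto simp: in_class_def)
next
  case (AxU1 A) then show ?case by (intro s_u1) (auto simp: in_class_def)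
next
  case (AxU2 A) then show ?case by (intro s_u2) (auto simp: in_class_def)
next
  case (AxA1 A B C) then show ?case by (intro s_a1) (auto simp: in_class_def)
next
  case (AxA2 A B C) then show ?case by (intro s_a2) (auto simp: in_class_def)
qed

theorem mainTheorem1:
  fixes L :: logic and F :: fm
    and N :: "'w \<Rightarrow> 'w set set" and V :: "nat \<Rightarrow> 'w set"
  assumes "deriv L F"
    and "in_class L N"
  shows "valid_in N V F"
  using sound[OF assms] unfolding valid_in_def by blast

end
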